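(* No randomized mechanism that is truthful in expectation (without money and with verification) for CAs with known $2$-minded bidders has expected approximation ratio at most $1.09$. This holds even restricted to instances with $n=2$ bidders and $m=2$ goods.
   Context: Combinatorial auction with a set $\mathsf U$ of $m$ goods (single copy each) and $n$ bidders; bidder $i$ has a public collection $\mathcal S_i$ of $k$ nonempty subsets of $\mathsf U$ (known bidders; here $k=2$) and a private valuation $v_i:\mathcal S_i\to\mathbb R_{\ge0}$, extended by $v_i(T)=\max\{v_i(S'):S'\in\mathcal S_i,S'\subseteq T\}$ ($0$ if none). A declaration is any valuation $b_i:\mathcal S_i\to\mathbb R_{\ge0}$. A randomized mechanism maps declarations to a probability distribution over feasible allocations (pairwise disjoint sets with $A_i\in\mathcal S_i\cup\{\emptyset\}$). It is truthful in expectation (with verification) if for all $i$, $\mathbf b_{-i}$, true $v_i$ and every declaration $b_i$ that never overbids on an awarded set (i.e., $b_i(A_i(b_i,\mathbf b_{-i}))\le v_i(A_i(b_i,\mathbf b_{-i}))$ for every outcome of the randomization), $\mathbb E[v_i(A_i(v_i,\mathbf b_{-i}))]\ge\mathbb E[v_i(A_i(b_i,\mathbf b_{-i}))]$. Expected approximation ratio $\alpha$: on every truthful input, the expected social welfare is at least $\mathrm{OPT}/\alpha$, where $\mathrm{OPT}$ is the maximum welfare of a feasible allocation. *)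

theory Defs
  imports "HOL-Probability.Probability"
begin

text \<open>Valuations / declarations are functions 'g set => real that are nonnegative
  on S i and zero outside S i (i.e. functions S_i -> R_{>=0}).\<close>

definition valid_collections :: "'b set \<Rightarrow> 'g set \<Rightarrow> nat \<Rightarrow> ('b \<Rightarrow> 'g set set) \<Rightarrow> bool" where
  "valid_collections N U k S \<longleftrightarrow>
     (\<forall>i\<in>N. card (S i) = k \<and> (\<forall>T\<in>S i. T \<noteq> {} \<and> T \<subseteq> U)) \<and>
     (\<forall>i. i \<notin> N \<longrightarrow> S i = {})"

definition valid_decl :: "'g set set \<Rightarrow> ('g set \<Rightarrow> real) \<Rightarrow> bool" where
  "valid_decl C b \<longleftrightarrow> (\<forall>T\<in>C. 0 \<le> b T) \<and> (\<forall>T. T \<notin> C \<longrightarrow> b T = 0)"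

definition valid_profile :: "'b set \<Rightarrow> ('b \<Rightarrow> 'g set set) \<Rightarrow> ('b \<Rightarrow> 'g set \<Rightarrow> real) \<Rightarrow> bool" where
  "valid_profile N S b \<longleftrightarrow> (\<forall>i\<in>N. valid_decl (S i) (b i)) \<and> (\<forall>i. i \<notin> N \<longrightarrow> b i = (\<lambda>_. 0))"

definition ext :: "'g set set \<Rightarrow> ('g set \<Rightarrow> real) \<Rightarrow> 'g set \<Rightarrow> real" where
  "ext C v T = Max (insert 0 (v ` {S'\<in>C. S' \<subseteq> T}))"

definition feasible :: "'b set \<Rightarrow> ('b \<Rightarrow> 'g set set) \<Rightarrow> ('b \<Rightarrow> 'g set) \<Rightarrow> bool" where
  "feasible N S A \<longleftrightarrow>
     (\<forall>i\<in>N. A i \<in> S i \<or> A i = {}) \<and>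
     (\<forall>i\<in>N. \<forall>j\<in>N. i \<noteq> j \<longrightarrow> A i \<inter> A j = {}) \<and>
     (\<forall>i. i \<notin> N \<longrightarrow> A i = {})"

definition welfare :: "'b set \<Rightarrow> ('b \<Rightarrow> 'g set set) \<Rightarrow> ('b \<Rightarrow> 'g set \<Rightarrow> real) \<Rightarrow> ('b \<Rightarrow> 'g set) \<Rightarrow> real" where
  "welfare N S v A = (\<Sum>i\<in>N. ext (S i) (v i) (A i))"

definition OPT :: "'b set \<Rightarrow> ('b \<Rightarrow> 'g set set) \<Rightarrow> ('b \<Rightarrow> 'g set \<Rightarrow> real) \<Rightarrow> real" where
  "OPT N S v = Max {welfare N S v A | A. feasible N S A}"

type_synonym ('b, 'g) mechanism = "('b \<Rightarrow> 'g set set) \<Rightarrow> ('b \<Rightarrow> 'g set \<Rightarrow> real) \<Rightarrow> ('b \<Rightarrow> 'g set) pmf"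

definition is_mechanism :: "'b set \<Rightarrow> 'g set \<Rightarrow> nat \<Rightarrow> ('b, 'g) mechanism \<Rightarrow> bool" where
  "is_mechanism N U k M \<longleftrightarrow>
     (\<forall>S b. valid_collections N U k S \<and> valid_profile N S b \<longrightarrow>
        (\<forall>A\<in>set_pmf (M S b). feasible N S A))"

definition truthful_in_expectation :: "'b set \<Rightarrow> 'g set \<Rightarrow> nat \<Rightarrow> ('b, 'g) mechanism \<Rightarrow> bool" where
  "truthful_in_expectation N U k M \<longleftrightarrow>
     (\<forall>S bp i v b'. valid_collections N U k S \<and> valid_profile N S bp \<and> i \<in> N \<and>
        valid_decl (S i) v \<and> valid_decl (S i) b' \<and>
        (\<forall>A\<in>set_pmf (M S (bp(i := b'))). b' (A i) \<le> ext (S i) v (A i)) \<longrightarrow>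
        measure_pmf.expectation (M S (bp(i := b'))) (\<lambda>A. ext (S i) v (A i))
          \<le> measure_pmf.expectation (M S (bp(i := v))) (\<lambda>A. ext (S i) v (A i)))"

definition expected_approx_ratio :: "'b set \<Rightarrow> 'g set \<Rightarrow> nat \<Rightarrow> ('b, 'g) mechanism \<Rightarrow> real \<Rightarrow> bool" where
  "expected_approx_ratio N U k M \<alpha> \<longleftrightarrow>
     (\<forall>S v. valid_collections N U k S \<and> valid_profile N S v \<longrightarrow>
        measure_pmf.expectation (M S v) (welfare N S v) \<ge> OPT N S v / \<alpha>)"

end

theory Submission
  imports Defs
begin

definition vl :: "'g \<Rightarrow> 'g \<Rightarrow> real \<Rightarrow> real \<Rightarrow> 'g set \<Rightarrow> real" where
  "vl a b p q T = (if T = {a} then p else if T = {b} then q else 0)"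

lemma ext_vl:
  assumes "a \<noteq> b" "0 \<le> p" "0 \<le> q" "T \<in> {{}, {a}, {b}}"
  shows "ext {{a},{b}} (vl a b p q) T = vl a b p q T"
proof -
  consider "T = {}" | "T = {a}" | "T = {b}" using assms(4) by blast
  then show ?thesis
  proof cases
    case 1
    have e: "{S'\<in>{{a},{b}}. S' \<subseteq> T} = {}" using 1 by auto
    show ?thesis unfolding ext_def e using 1 by (simp add: vl_def)
  next
    case 2
    have "{S'\<in>{{a},{b}}. S' \<subseteq> T} = {{a}}" using 2 assms(1) by auto
    then show ?thesis using 2 assms by (simp add: ext_def vl_def)
  next
    case 3
    have "{S'\<in>{{a},{b}}. S' \<subseteq> T} = {{b}}" using 3 assms(1) by auto
    then show ?thesis using 3 assms by (auto simp add: ext_def vl_def)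
  qed
qed

lemma valid_decl_vl:
  assumes "0 \<le> p" "0 \<le> q"
  shows "valid_decl {{a},{b}} (vl a b p q)"
  using assms by (auto simp: valid_decl_def vl_def)

lemma exp_le:
  fixes P :: "'a pmf" and f g :: "'a \<Rightarrow> real"
  assumes "finite (set_pmf P)" "\<And>A. A \<in> set_pmf P \<Longrightarrow> f A \<le> g A"
  shows "measure_pmf.expectation P f \<le> measure_pmf.expectation P g"
proof (rule integral_mono_AE)
  show "integrable (measure_pmf P) f" by (rule integrable_measure_pmf_finite[OF assms(1)])
  show "integrable (measure_pmf P) g" by (rule integrable_measure_pmf_finite[OF assms(1)])
  show "AE x in measure_pmf P. f x \<le> g x" by (rule AE_pmfI) (rule assms(2))
qed

lemma exp_lin:
  fixes P :: "'a pmf" and u :: "'a \<Rightarrow> real" and c d :: real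
  assumes "finite (set_pmf P)"
  shows "measure_pmf.expectation P (\<lambda>A. c + d * u A) = c + d * measure_pmf.expectation P u"
proof -
  have "measure_pmf.expectation P (\<lambda>A. c + d * u A) = measure_pmf.expectation P (\<lambda>A. c) + measure_pmf.expectation P (\<lambda>A. d * u A)"
    by (rule Bochner_Integration.integral_add; rule integrable_measure_pmf_finite[OF assms])
  also have "\<dots> = c + d * measure_pmf.expectation P u"
    by (simp add: measure_pmf.prob_space)
  finally show ?thesis .
qed

lemma exp_add:
  fixes P :: "'a pmf" and u w :: "'a \<Rightarrow> real"
  assumes "finite (set_pmf P)"
  shows "measure_pmf.expectation P (\<lambda>A. u A + w A) = measure_pmf.expectation P u + measure_pmf.expectation P w"
  by (rule Bochner_Integration.integral_add; rule integrable_measure_pmf_finite[OF assms])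

lemma truth_use:
  assumes "truthful_in_expectation N U k M"
    "valid_collections N U k S \<and> valid_profile N S bp \<and> i \<in> N \<and>
        valid_decl (S i) v \<and> valid_decl (S i) b' \<and>
        (\<forall>A\<in>set_pmf (M S (bp(i := b'))). b' (A i) \<le> ext (S i) v (A i))"
  shows "measure_pmf.expectation (M S (bp(i := b'))) (\<lambda>A. ext (S i) v (A i))
          \<le> measure_pmf.expectation (M S (bp(i := v))) (\<lambda>A. ext (S i) v (A i))"
  using assms unfolding truthful_in_expectation_def by blast

theorem theorem13:
  fixes N :: "'b set" and U :: "'g set" and M :: "('b, 'g) mechanism"
  assumes "card N = 2" and "card U = 2"
    and "is_mechanism N U 2 M"
    and "truthful_in_expectation N U 2 M"
    and "expected_approx_ratio N U 2 M 1.09"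
  shows False
proof -
  obtain i1 i2 where N: "N = {i1, i2}" and i12: "i1 \<noteq> i2" using assms(1) card_2_iff by metis
  obtain a b where U: "U = {a, b}" and ab: "a \<noteq> b" using assms(2) card_2_iff by metis
  define x :: real where "x = 2/5"
  define C where "C = {{a},{b}}"
  define S where "S = (\<lambda>i. if i \<in> N then C else {})"
  define vE where "vE = (\<lambda>i. if i \<in> N then vl a b 1 x else (\<lambda>_. 0))"
  define C1 where "C1 = vE(i2 := vl a b 1 0)"
  define C2 where "C2 = vE(i1 := vl a b 1 0)"
  have SC: "S i1 = C" "S i2 = C" using N by (auto simp: S_def)
  have cardC: "card C = 2" using ab by (simp add: C_def)
  have finC: "finite C" by (simp add: C_def)
  have VC: "valid_collections N U 2 S"
    using cardC U by (auto simp: valid_collections_def S_def C_def)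
  have vdx: "valid_decl C (vl a b 1 x)" and vd0: "valid_decl C (vl a b 1 0)"
    unfolding C_def by (rule valid_decl_vl; simp add: x_def)+
  have VP: "valid_profile N S vE" "valid_profile N S C1" "valid_profile N S C2"
    using vdx vd0 N by (auto simp: valid_profile_def S_def vE_def C1_def C2_def)
  have vE1: "vE i1 = vl a b 1 x" and vE2: "vE i2 = vl a b 1 x" using N by (auto simp: vE_def)
  have C1v: "C1 i1 = vl a b 1 x" "C1 i2 = vl a b 1 0" using N i12 by (auto simp: C1_def vE_def)
  have C2v: "C2 i1 = vl a b 1 0" "C2 i2 = vl a b 1 x" using N i12 by (auto simp: C2_def vE_def)
  have finF: "finite {A. feasible N S A}"
  proof -
    have "{A. feasible N S A} \<subseteq> (\<lambda>f i. if i \<in> N then f i else {}) ` (PiE N (\<lambda>i. insert {} (S i)))"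
    proof
      fix A assume "A \<in> {A. feasible N S A}"
      hence F: "feasible N S A" by simp
      have "A = (\<lambda>i. if i \<in> N then restrict A N i else {})"
        using F by (auto simp: feasible_def fun_eq_iff)
      moreover have "restrict A N \<in> PiE N (\<lambda>i. insert {} (S i))"
        using F by (auto simp: feasible_def)
      ultimately show "A \<in> (\<lambda>f i. if i \<in> N then f i else {}) ` (PiE N (\<lambda>i. insert {} (S i)))"
        by blast
    qed
    moreover have "finite (PiE N (\<lambda>i. insert {} (S i)))"
      using N finC by (intro finite_PiE) (auto simp: S_def)
    ultimately show ?thesis by (meson finite_imageI finite_subset)
  qed
  have supp: "\<And>P A. valid_profile N S P \<Longrightarrow> A \<in> set_pmf (M S P) \<Longrightarrow> feasible N S A"
    using assms(3) VC unfolding is_mechanism_def by blast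
  have finS: "\<And>P. valid_profile N S P \<Longrightarrow> finite (set_pmf (M S P))"
    using supp finF by (metis mem_Collect_eq rev_finite_subset subsetI)
  have feasD: "A i1 \<in> {{}, {a}, {b}} \<and> A i2 \<in> {{}, {a}, {b}} \<and> A i1 \<inter> A i2 = {}"
    if "feasible N S A" for A
    using that N i12 SC unfolding feasible_def C_def by auto
  have welf: "welfare N S P A = ext C (P i1) (A i1) + ext C (P i2) (A i2)" for P A
    using N i12 SC by (simp add: welfare_def)
  have ex: "\<And>T. T \<in> {{}, {a}, {b}} \<Longrightarrow> ext C (vl a b 1 x) T = vl a b 1 x T"
    unfolding C_def by (rule ext_vl[OF ab]) (auto simp: x_def)
  have e0: "\<And>T. T \<in> {{}, {a}, {b}} \<Longrightarrow> ext C (vl a b 1 0) T = vl a b 1 0 T"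
    unfolding C_def by (rule ext_vl[OF ab]) auto
  define u1 where "u1 = (\<lambda>A::'b \<Rightarrow> 'g set. ext C (vl a b 1 x) (A i1))"
  define u2 where "u2 = (\<lambda>A::'b \<Rightarrow> 'g set. ext C (vl a b 1 x) (A i2))"
  have T2: "measure_pmf.expectation (M S C1) u2 \<le> measure_pmf.expectation (M S vE) u2"
  proof -
    have upd1: "vE(i2 := vl a b 1 x) = vE" using vE2 by auto
    have "\<forall>A\<in>set_pmf (M S (vE(i2 := vl a b 1 0))). vl a b 1 0 (A i2) \<le> ext (S i2) (vl a b 1 x) (A i2)"
    proof
      fix A assume "A \<in> set_pmf (M S (vE(i2 := vl a b 1 0)))"
      hence "feasible N S A" using supp VP(2) C1_def by metis
      hence "A i2 \<in> {{}, {a}, {b}}" using feasD by blast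
      thus "vl a b 1 0 (A i2) \<le> ext (S i2) (vl a b 1 x) (A i2)"
        using ex SC ab by (auto simp: vl_def x_def)
    qed
    note ov = this
    have "measure_pmf.expectation (M S (vE(i2 := vl a b 1 0))) (\<lambda>A. ext (S i2) (vl a b 1 x) (A i2))
          \<le> measure_pmf.expectation (M S (vE(i2 := vl a b 1 x))) (\<lambda>A. ext (S i2) (vl a b 1 x) (A i2))"
    proof -
      have pr: "valid_collections N U 2 S \<and> valid_profile N S vE \<and> i2 \<in> N \<and>
        valid_decl (S i2) (vl a b 1 x) \<and> valid_decl (S i2) (vl a b 1 0) \<and>
        (\<forall>A\<in>set_pmf (M S (vE(i2 := vl a b 1 0))). vl a b 1 0 (A i2) \<le> ext (S i2) (vl a b 1 x) (A i2))"
        using ov VC VP(1) vdx vd0 unfolding SC by (simp add: N)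
      show ?thesis by (rule truth_use[OF assms(4) pr])
    qed
    thus ?thesis using upd1 SC by (simp add: C1_def u2_def)
  qed
  have T1: "measure_pmf.expectation (M S C2) u1 \<le> measure_pmf.expectation (M S vE) u1"
  proof -
    have upd1: "vE(i1 := vl a b 1 x) = vE" using vE1 by auto
    have "\<forall>A\<in>set_pmf (M S (vE(i1 := vl a b 1 0))). vl a b 1 0 (A i1) \<le> ext (S i1) (vl a b 1 x) (A i1)"
    proof
      fix A assume "A \<in> set_pmf (M S (vE(i1 := vl a b 1 0)))"
      hence "feasible N S A" using supp VP(3) C2_def by metis
      hence "A i1 \<in> {{}, {a}, {b}}" using feasD by blast
      thus "vl a b 1 0 (A i1) \<le> ext (S i1) (vl a b 1 x) (A i1)"
        using ex SC ab by (auto simp: vl_def x_def)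
    qed
    note ov = this
    have "measure_pmf.expectation (M S (vE(i1 := vl a b 1 0))) (\<lambda>A. ext (S i1) (vl a b 1 x) (A i1))
          \<le> measure_pmf.expectation (M S (vE(i1 := vl a b 1 x))) (\<lambda>A. ext (S i1) (vl a b 1 x) (A i1))"
    proof -
      have pr: "valid_collections N U 2 S \<and> valid_profile N S vE \<and> i1 \<in> N \<and>
        valid_decl (S i1) (vl a b 1 x) \<and> valid_decl (S i1) (vl a b 1 0) \<and>
        (\<forall>A\<in>set_pmf (M S (vE(i1 := vl a b 1 0))). vl a b 1 0 (A i1) \<le> ext (S i1) (vl a b 1 x) (A i1))"
        using ov VC VP(1) vdx vd0 unfolding SC by (simp add: N)
      show ?thesis by (rule truth_use[OF assms(4) pr])
    qed
    thus ?thesis using upd1 SC by (simp add: C2_def u1_def)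
  qed
  have TE: "measure_pmf.expectation (M S vE) u1 + measure_pmf.expectation (M S vE) u2 \<le> 1 + x"
  proof -
    have "measure_pmf.expectation (M S vE) (\<lambda>A. u1 A + u2 A) \<le> measure_pmf.expectation (M S vE) (\<lambda>A. 1 + x)"
    proof (rule exp_le[OF finS[OF VP(1)]])
      fix A assume "A \<in> set_pmf (M S vE)"
      hence "feasible N S A" using supp VP(1) by blast
      hence "A i1 \<in> {{}, {a}, {b}} \<and> A i2 \<in> {{}, {a}, {b}} \<and> A i1 \<inter> A i2 = {}" using feasD by blast
      hence h: "(A i1 = {} \<or> A i1 = {a} \<or> A i1 = {b}) \<and> (A i2 = {} \<or> A i2 = {a} \<or> A i2 = {b})
          \<and> A i1 \<inter> A i2 = {}" by blast
      have "u1 A = vl a b 1 x (A i1)" "u2 A = vl a b 1 x (A i2)"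
        using ex h unfolding u1_def u2_def by auto
      moreover have "vl a b 1 x (A i1) + vl a b 1 x (A i2) \<le> 1 + x"
        using h ab unfolding vl_def x_def by (elim conjE disjE) simp_all
      ultimately show "u1 A + u2 A \<le> 1 + x" by simp
    qed
    thus ?thesis by (simp add: exp_add[OF finS[OF VP(1)]])
  qed
  have W1: "measure_pmf.expectation (M S C1) (welfare N S C1) \<le> 1 + x * measure_pmf.expectation (M S C1) u2"
  proof -
    have "measure_pmf.expectation (M S C1) (welfare N S C1) \<le> measure_pmf.expectation (M S C1) (\<lambda>A. 1 + x * u2 A)"
    proof (rule exp_le[OF finS[OF VP(2)]])
      fix A assume "A \<in> set_pmf (M S C1)"
      hence "feasible N S A" using supp VP(2) by blast
      hence "A i1 \<in> {{}, {a}, {b}} \<and> A i2 \<in> {{}, {a}, {b}} \<and> A i1 \<inter> A i2 = {}" using feasD by blast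
      hence h: "(A i1 = {} \<or> A i1 = {a} \<or> A i1 = {b}) \<and> (A i2 = {} \<or> A i2 = {a} \<or> A i2 = {b})
          \<and> A i1 \<inter> A i2 = {}" by blast
      have "welfare N S C1 A = vl a b 1 x (A i1) + vl a b 1 0 (A i2)"
        using ex e0 h unfolding welf C1v by auto
      moreover have "u2 A = vl a b 1 x (A i2)"
        using ex h unfolding u2_def by auto
      moreover have "vl a b 1 x (A i1) + vl a b 1 0 (A i2) \<le> 1 + x * vl a b 1 x (A i2)"
        using h ab unfolding vl_def x_def by (elim conjE disjE) simp_all
      ultimately show "welfare N S C1 A \<le> 1 + x * u2 A" by simp
    qed
    thus ?thesis by (simp add: exp_lin[OF finS[OF VP(2)]])
  qed
  have W2: "measure_pmf.expectation (M S C2) (welfare N S C2) \<le> 1 + x * measure_pmf.expectation (M S C2) u1"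
  proof -
    have "measure_pmf.expectation (M S C2) (welfare N S C2) \<le> measure_pmf.expectation (M S C2) (\<lambda>A. 1 + x * u1 A)"
    proof (rule exp_le[OF finS[OF VP(3)]])
      fix A assume "A \<in> set_pmf (M S C2)"
      hence "feasible N S A" using supp VP(3) by blast
      hence "A i1 \<in> {{}, {a}, {b}} \<and> A i2 \<in> {{}, {a}, {b}} \<and> A i1 \<inter> A i2 = {}" using feasD by blast
      hence h: "(A i1 = {} \<or> A i1 = {a} \<or> A i1 = {b}) \<and> (A i2 = {} \<or> A i2 = {a} \<or> A i2 = {b})
          \<and> A i1 \<inter> A i2 = {}" by blast
      have "welfare N S C2 A = vl a b 1 x (A i2) + vl a b 1 0 (A i1)"
        using ex e0 h unfolding welf C2v by auto
      moreover have "u1 A = vl a b 1 x (A i1)"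
        using ex h unfolding u1_def by auto
      moreover have "vl a b 1 x (A i2) + vl a b 1 0 (A i1) \<le> 1 + x * vl a b 1 x (A i1)"
        using h ab unfolding vl_def x_def by (elim conjE disjE) simp_all
      ultimately show "welfare N S C2 A \<le> 1 + x * u1 A" by simp
    qed
    thus ?thesis by (simp add: exp_lin[OF finS[OF VP(3)]])
  qed
  have finW: "\<And>P. finite {welfare N S P A | A. feasible N S A}"
    using finF by (simp add: setcompr_eq_image)
  define A1 where "A1 = (\<lambda>i. if i = i1 then {b} else if i = i2 then {a} else ({}::'g set))"
  define A2 where "A2 = (\<lambda>i. if i = i1 then {a} else if i = i2 then {b} else ({}::'g set))"
  have fA1: "feasible N S A1" using N i12 ab by (auto simp: feasible_def A1_def S_def C_def)
  have fA2: "feasible N S A2" using N i12 ab by (auto simp: feasible_def A2_def S_def C_def)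
  have O1: "OPT N S C1 \<ge> 1 + x"
  proof -
    have "welfare N S C1 A1 = 1 + x" using ex e0 ab i12
      by (simp add: welf C1v A1_def vl_def)
    moreover have "welfare N S C1 A1 \<le> OPT N S C1"
      unfolding OPT_def using finW fA1 by (intro Max_ge) auto
    ultimately show ?thesis by simp
  qed
  have O2: "OPT N S C2 \<ge> 1 + x"
  proof -
    have "welfare N S C2 A2 = 1 + x" using ex e0 ab i12
      by (simp add: welf C2v A2_def vl_def)
    moreover have "welfare N S C2 A2 \<le> OPT N S C2"
      unfolding OPT_def using finW fA2 by (intro Max_ge) auto
    ultimately show ?thesis by simp
  qed
  have R1: "measure_pmf.expectation (M S C1) (welfare N S C1) \<ge> OPT N S C1 / 1.09"
    using assms(5) VC VP(2) unfolding expected_approx_ratio_def by blast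
  have R2: "measure_pmf.expectation (M S C2) (welfare N S C2) \<ge> OPT N S C2 / 1.09"
    using assms(5) VC VP(3) unfolding expected_approx_ratio_def by blast
  have "x * measure_pmf.expectation (M S C1) u2 + x * measure_pmf.expectation (M S C2) u1 \<le> x * (1 + x)"
    using T1 T2 TE by (simp add: x_def)
  then show False using W1 W2 R1 R2 O1 O2 by (simp add: x_def)
qed

end
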